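(* For every positive integer $n$, we have $n \le N_{3n}(\frac{1}{2}) \le n+1$.
   Context: For a positive integer $m$, let $\mathcal{P}_m$ denote the family of all sets of $m$ points in the Euclidean plane such that the distance between any two points of the set is at most $1$. For $0 < r \le 1$, let $N_m(r)$ be the largest integer $k$ such that for every $P \in \mathcal{P}_m$ there exists a circle of radius $r$ (i.e. a closed disc of radius $r$) which covers (contains) at least $k$ points of $P$. *)

theory Defs
  imports "HOL-Analysis.Analysis"
begin

text \<open>Points of the Euclidean plane are modelled as complex numbers (with the
Euclidean distance). \<open>point_sets m\<close> is the family of all sets of exactly
\<open>m\<close> points in the plane in which any two points have distance at most 1.\<close>

definition point_sets :: "nat \<Rightarrow> complex set set" where
  "point_sets m = {P. finite P \<and> card P = m \<and> (\<forall>x\<in>P. \<forall>y\<in>P. dist x y \<le> 1)}"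

definition N :: "nat \<Rightarrow> real \<Rightarrow> nat" where
  "N m r = (GREATEST k. \<forall>P \<in> point_sets m. \<exists>c. card (P \<inter> cball c r) \<ge> k)"

end

theory Submission
  imports Defs
begin


lemma dist_sq: "(dist (x::complex) y)^2 = (Re x - Re y)^2 + (Im x - Im y)^2"
  by (simp add: dist_norm cmod_power2)

lemma dist_le_iff: "0 \<le> k \<Longrightarrow> dist (x::complex) y \<le> k \<longleftrightarrow> (Re x - Re y)^2 + (Im x - Im y)^2 \<le> k^2"
  by (metis dist_sq zero_le_dist power2_le_iff_abs_le abs_of_nonneg)

lemma dist_eq1_iff: "dist (x::complex) y = 1 \<longleftrightarrow> (Re x - Re y)^2 + (Im x - Im y)^2 = 1"
  by (metis dist_sq zero_le_dist power_one power2_eq_iff_nonneg zero_le_one)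

lemma half_sq: "0 \<le> (r::real) \<Longrightarrow> r \<le> 1/2 \<Longrightarrow> r^2 \<le> 1/4"
  using power_mono[of r "1/2" 2] by (simp add: power_divide)

lemma med_id:
  fixes c x y :: complex
  shows "(dist c ((x+y)/2))^2 = ((dist c x)^2 + (dist c y)^2)/2 - (dist x y)^2/4"
  unfolding dist_sq by (simp add: power2_eq_square field_simps)

lemma pin:
  fixes p q c :: complex
  assumes "dist p q = 1" "dist c p \<le> 1/2" "dist c q \<le> 1/2"
  shows "c = (p+q)/2"
proof -
  have a: "(dist c p)^2 \<le> 1/4" "(dist c q)^2 \<le> 1/4"
    using assms(2,3) half_sq zero_le_dist by auto
  have lin: "\<And>A B C X::real. A = 1 \<Longrightarrow> B \<le> 1/4 \<Longrightarrow> C \<le> 1/4 \<Longrightarrow> X = (B + C)/2 - A/4 \<Longrightarrow> X \<le> 0"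
    unfolding add_divide_distrib by linarith
  have a1: "(dist p q)^2 = 1" using assms(1) by simp
  have "(dist c ((p+q)/2))^2 \<le> 0"
    using lin[OF a1 a med_id] .
  then show ?thesis by simp
qed

lemma near:
  fixes x y A B c :: complex and d :: real
  assumes "dist A B = 1" "0 \<le> d" "d^2 \<le> 1/2" "dist x A \<le> d^2" "dist y B \<le> d^2"
    "dist c x \<le> 1/2" "dist c y \<le> 1/2"
  shows "dist c ((A+B)/2) \<le> d + d^2"
proof -
  have dxy: "1 - 2*d^2 \<le> dist x y"
    using dist_triangle[of A B x] dist_triangle[of x B y] assms(1,4,5)
    by (simp add: dist_commute)
  have dxy0: "0 \<le> 1 - 2*d^2" using assms(3) by simp
  have sq: "(1 - 2*d^2)^2 \<le> (dist x y)^2" using power_mono[OF dxy dxy0] .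
  have a: "(dist c x)^2 \<le> 1/4" "(dist c y)^2 \<le> 1/4"
    using assms(6,7) half_sq zero_le_dist by auto
  have e: "(1 - 2*d^2)^2 = 1 - 4*d^2 + 4*d^2*d^2" by (simp add: power2_eq_square algebra_simps)
  have lin: "\<And>B C X Y E::real. Y \<ge> E \<Longrightarrow> B \<le> 1/4 \<Longrightarrow> C \<le> 1/4 \<Longrightarrow> X = (B + C)/2 - Y/4
     \<Longrightarrow> E = 1 - 4*d^2 + 4*d^2*d^2 \<Longrightarrow> X \<le> d^2 - d^2*d^2"
    unfolding add_divide_distrib by linarith
  have "(dist c ((x+y)/2))^2 \<le> d^2 - d^2*d^2" using lin[OF sq a med_id e] .
  also have "\<dots> \<le> d^2" by simp
  finally have "dist c ((x+y)/2) \<le> d"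
    using assms(2) power2_le_imp_le by blast
  moreover have "dist ((x+y)/2) ((A+B)/2) \<le> d^2"
  proof -
    have eq: "(x+y)/2 - (A+B)/2 = ((x - A) + (y - B))/2" by (simp add: field_simps)
    have "dist ((x+y)/2) ((A+B)/2) = cmod ((x - A) + (y - B)) / 2"
      unfolding dist_norm eq by (simp add: norm_divide)
    also have "\<dots> \<le> (cmod (x - A) + cmod (y - B))/2"
      using norm_triangle_ineq by (simp add: divide_right_mono)
    also have "\<dots> \<le> d^2" using assms(4,5) by (simp add: dist_norm)
    finally show ?thesis .
  qed
  ultimately show ?thesis using dist_triangle[of c "(A+B)/2" "(x+y)/2"] by linarith
qed

lemma arc_real:
  fixes a1 a2 b1 b2 w1 w2 t N :: real
  assumes ha: "a1^2 + a2^2 = 1" and hb: "b1^2 + b2^2 = 1" and t: "0 \<le> t" and N: "0 < N" "N \<le> 1 + t"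
    and NN: "N^2 = (a1 + t*b1)^2 + (a2 + t*b2)^2"
    and wa: "(w1 - a1)^2 + (w2 - a2)^2 \<le> 1" and wb: "(w1 - b1)^2 + (w2 - b2)^2 \<le> 1"
  shows "(w1 - (a1 + t*b1)/N)^2 + (w2 - (a2 + t*b2)/N)^2 \<le> 1"
proof -
  define W where "W = w1^2 + w2^2"
  define S where "S = (a1*w1 + a2*w2) + t*(b1*w1 + b2*w2)"
  have e1: "(w1 - a1)^2 + (w2 - a2)^2 = W - 2*(a1*w1 + a2*w2) + (a1^2 + a2^2)"
    unfolding W_def by (simp add: power2_eq_square algebra_simps)
  have e2: "(w1 - b1)^2 + (w2 - b2)^2 = W - 2*(b1*w1 + b2*w2) + (b1^2 + b2^2)"
    unfolding W_def by (simp add: power2_eq_square algebra_simps)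
  have k1: "W \<le> 2*(a1*w1 + a2*w2)" using e1 wa ha by linarith
  have k2: "W \<le> 2*(b1*w1 + b2*w2)" using e2 wb hb by linarith
  have k3: "t*W \<le> t*(2*(b1*w1 + b2*w2))" using k2 t by (rule mult_left_mono)
  have W0: "0 \<le> W" unfolding W_def by simp
  have k4: "N*W \<le> (1+t)*W" using N(2) W0 by (rule mult_right_mono)
  have k5: "N*W \<le> 2*S" unfolding S_def using k1 k3 k4 by (simp add: algebra_simps)
  have e3: "(w1 - (a1 + t*b1)/N)^2 + (w2 - (a2 + t*b2)/N)^2 = W - 2*S/N + ((a1 + t*b1)^2 + (a2 + t*b2)^2)/N^2"
    unfolding W_def S_def using N(1) by (simp add: power2_eq_square field_simps)
  have e4: "((a1 + t*b1)^2 + (a2 + t*b2)^2)/N^2 = 1" using N(1) by (simp add: NN[symmetric])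
  have "2*S/N \<ge> W" using k5 N(1) by (simp add: field_simps)
  then show ?thesis using e3 e4 by linarith
qed

lemma ne_real:
  fixes a1 a2 b1 b2 t N :: real
  assumes ha: "a1^2 + a2^2 = 1" and hb: "b1^2 + b2^2 = 1" and hab: "(a1 - b1)^2 + (a2 - b2)^2 = 1"
    and t: "0 < t" and e1: "a1 + t*b1 = N*a1" and e2: "a2 + t*b2 = N*a2"
  shows False
proof -
  have ab: "a1*b1 + a2*b2 = 1/2"
  proof -
    have "(a1 - b1)^2 + (a2 - b2)^2 = (a1^2 + a2^2) + (b1^2 + b2^2) - 2*(a1*b1 + a2*b2)"
      by (simp add: power2_eq_square algebra_simps)
    then show ?thesis using ha hb hab by argo
  qed
  have f1: "t*b1 = (N-1)*a1" "t*b2 = (N-1)*a2" using e1 e2 by (simp_all add: algebra_simps)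
  have "t*(a1*b1 + a2*b2) = a1*(t*b1) + a2*(t*b2)" by (simp add: algebra_simps)
  also have "\<dots> = a1*((N-1)*a1) + a2*((N-1)*a2)" using f1 by simp
  also have "\<dots> = (N-1)*(a1^2 + a2^2)" by (simp add: power2_eq_square algebra_simps)
  finally have "t*(a1*b1 + a2*b2) = (N-1)*(a1^2 + a2^2)" .
  then have g1: "t/2 = N - 1" using ab ha by simp
  have "t*(b1^2 + b2^2) = b1*(t*b1) + b2*(t*b2)" by (simp add: power2_eq_square algebra_simps)
  also have "\<dots> = b1*((N-1)*a1) + b2*((N-1)*a2)" using f1 by simp
  also have "\<dots> = (N-1)*(a1*b1 + a2*b2)" by (simp add: algebra_simps)
  finally have "t*(b1^2 + b2^2) = (N-1)*(a1*b1 + a2*b2)" .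
  then have g2: "t = (N-1)/2" using ab hb by simp
  from g1 g2 t show False by argo
qed

lemma cmod_eq1_coords: "cmod (z::complex) = 1 \<Longrightarrow> (Re z)^2 + (Im z)^2 = 1"
  using cmod_power2[of z] by simp

lemma arc_point:
  fixes A B C :: complex and e :: real
  assumes AB: "dist A B = 1" and BC: "dist B C = 1" and AC: "dist A C = 1" and e: "0 < e"
  shows "\<exists>x. dist x B = 1 \<and> x \<noteq> A \<and> dist x A \<le> e \<and>
           (\<forall>p. dist p A \<le> 1 \<longrightarrow> dist p C \<le> 1 \<longrightarrow> dist p x \<le> 1)"
proof -
  define a where "a = A - B"
  define b where "b = C - B"
  define t where "t = min (1/2) (e/4)"
  define v where "v = a + of_real t * b"
  define N where "N = cmod v"
  define x where "x = B + v / of_real N"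
  have t0: "0 < t" "t \<le> 1/2" "4*t \<le> e" using e unfolding t_def by auto
  have na: "cmod a = 1" using AB unfolding a_def by (simp add: dist_norm)
  have nb: "cmod b = 1" using BC unfolding b_def by (simp add: dist_norm norm_minus_commute)
  have nab: "cmod (a - b) = 1" using AC unfolding a_def b_def by (simp add: dist_norm)
  have ntb: "cmod (of_real t * b) = t" using nb t0 by (simp add: norm_mult)
  have N1: "N \<le> 1 + t" unfolding N_def v_def using norm_triangle_ineq[of a "of_real t * b"] na ntb by simp
  have "cmod a \<le> cmod v + cmod (of_real t * b)"
    using norm_triangle_ineq4[of v "of_real t * b"] unfolding v_def by simp
  then have N2: "1 - t \<le> N" unfolding N_def using na ntb by simp
  have Npos: "0 < N" using N2 t0 by simp
  have xB: "dist x B = 1"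
    unfolding x_def dist_norm using Npos by (simp add: norm_divide N_def)
  have xA: "dist x A \<le> e"
  proof -
    have eq: "x - A = (of_real (1 - N) * a + of_real t * b) / of_real N"
      unfolding x_def v_def a_def using Npos by (simp add: field_simps)
    have "cmod (of_real (1 - N) * a + of_real t * b) \<le> \<bar>1 - N\<bar> + t"
    proof -
      have n1: "cmod (of_real (1 - N) * a) = \<bar>1 - N\<bar>"
        using na by (simp only: norm_mult norm_of_real) simp
      show ?thesis using norm_triangle_ineq[of "of_real (1 - N) * a" "of_real t * b"] n1 ntb by linarith
    qed
    also have "\<dots> \<le> 2*t" using N1 N2 by (simp add: abs_le_iff)
    finally have h: "cmod (of_real (1 - N) * a + of_real t * b) \<le> 2*t" .
    have "dist x A = cmod (of_real (1 - N) * a + of_real t * b) / N"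
      unfolding dist_norm eq using Npos by (simp add: norm_divide)
    also have "\<dots> \<le> 2*t / N" using h Npos by (simp add: divide_right_mono)
    also have "\<dots> \<le> 4*t"
      using Npos N2 t0 by (simp add: field_simps)
    finally show ?thesis using t0 by linarith
  qed
  have ca: "(Re a)^2 + (Im a)^2 = 1" using cmod_eq1_coords[OF na] .
  have cb: "(Re b)^2 + (Im b)^2 = 1" using cmod_eq1_coords[OF nb] .
  have cab: "(Re a - Re b)^2 + (Im a - Im b)^2 = 1" using cmod_eq1_coords[OF nab] by simp
  have NN: "N^2 = (Re a + t * Re b)^2 + (Im a + t * Im b)^2"
    unfolding N_def v_def cmod_power2 by simp
  have xnA: "x \<noteq> A"
  proof
    assume "x = A"
    then have "v / of_real N = a" unfolding x_def a_def by (simp add: algebra_simps)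
    then have "v = of_real N * a" using Npos by (simp add: field_simps)
    then have "Re a + t * Re b = N * Re a" "Im a + t * Im b = N * Im a"
      unfolding v_def by (simp_all add: complex_eq_iff)
    then show False using ne_real[OF ca cb cab t0(1)] by blast
  qed
  have arc: "\<forall>p. dist p A \<le> 1 \<longrightarrow> dist p C \<le> 1 \<longrightarrow> dist p x \<le> 1"
  proof (intro allI impI)
    fix p assume pA: "dist p A \<le> 1" and pC: "dist p C \<le> 1"
    define w where "w = p - B"
    have wa: "(Re w - Re a)^2 + (Im w - Im a)^2 \<le> 1"
      using pA unfolding w_def a_def dist_le_iff[OF zero_le_one] by simp
    have wb: "(Re w - Re b)^2 + (Im w - Im b)^2 \<le> 1"
      using pC unfolding w_def b_def dist_le_iff[OF zero_le_one] by simp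
    have r: "(Re w - (Re a + t * Re b)/N)^2 + (Im w - (Im a + t * Im b)/N)^2 \<le> 1"
      using arc_real[OF ca cb _ Npos N1 NN wa wb] t0 by simp
    show "dist p x \<le> 1"
      unfolding dist_le_iff[OF zero_le_one] x_def v_def w_def using r unfolding w_def
      by (simp add: algebra_simps)
  qed
  show ?thesis using xB xnA xA arc by blast
qed

lemma dist_mid: "dist ((A+B)/2) A = dist A B / 2" "dist ((A+B)/2) B = dist A B / 2" for A B :: complex
proof -
  have e1: "(A+B)/2 - A = (B - A)/2" and e2: "(A+B)/2 - B = (A - B)/2" by (simp_all add: field_simps)
  show "dist ((A+B)/2) A = dist A B / 2" unfolding dist_norm e1
    by (simp add: norm_divide norm_minus_commute)
  show "dist ((A+B)/2) B = dist A B / 2" unfolding dist_norm e2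
    by (simp add: norm_divide)
qed

lemma pair_bound:
  fixes P :: "complex set" and A B x y c :: complex and g d :: real and k :: nat
  assumes fin: "finite P" and AP: "A \<in> P" and BP: "B \<in> P" and AB: "dist A B = 1"
    and bound: "card (P \<inter> cball ((A+B)/2) (1/2)) \<le> k + 1"
    and gap: "\<forall>p\<in>P. dist p ((A+B)/2) \<le> 1/2 \<or> 1/2 + g \<le> dist p ((A+B)/2)"
    and d: "0 \<le> d" "d^2 \<le> 1/2" "d + d^2 < g"
    and xB: "dist x B = 1" and xA: "x \<noteq> A" "dist x A \<le> d^2" and yB: "dist y B \<le> d^2"
    and cx: "dist c x \<le> 1/2" and cy: "dist c y \<le> 1/2"
  shows "card (P \<inter> cball c (1/2)) \<le> k"
proof -
  define M where "M = (A+B)/2"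
  have cM: "dist c M \<le> d + d^2" unfolding M_def using near[OF AB d(1) d(2) xA(2) yB cx cy] .
  have sub: "P \<inter> cball c (1/2) \<subseteq> P \<inter> cball M (1/2)"
  proof
    fix p assume p: "p \<in> P \<inter> cball c (1/2)"
    have "dist p M \<le> dist p c + dist c M" by (rule dist_triangle)
    moreover have "dist p c \<le> 1/2" using p by (simp add: dist_commute)
    ultimately have "dist p M < 1/2 + g" using cM d(3) by linarith
    then have "dist p M \<le> 1/2" using gap p unfolding M_def by force
    then show "p \<in> P \<inter> cball M (1/2)" using p by (simp add: dist_commute)
  qed
  have notboth: "\<not> (A \<in> cball c (1/2) \<and> B \<in> cball c (1/2))"
  proof
    assume h: "A \<in> cball c (1/2) \<and> B \<in> cball c (1/2)"
    then have cMe: "c = M" unfolding M_def using pin[OF AB] by simp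
    have cB: "dist c B \<le> 1/2" using h by simp
    have "c = (x + B)/2" using pin[OF xB cx cB] .
    then have "x = A" using cMe unfolding M_def by (simp add: field_simps)
    with xA(1) show False by simp
  qed
  have AM: "A \<in> P \<inter> cball M (1/2)" "B \<in> P \<inter> cball M (1/2)"
    using AP BP dist_mid[of A B] AB unfolding M_def by simp_all
  have finM: "finite (P \<inter> cball M (1/2))" using fin by simp
  have bM: "card (P \<inter> cball M (1/2)) \<le> k + 1" using bound unfolding M_def .
  show ?thesis
  proof (cases "A \<in> cball c (1/2)")
    case True
    then have "B \<notin> cball c (1/2)" using notboth by blast
    then have "P \<inter> cball c (1/2) \<subseteq> (P \<inter> cball M (1/2)) - {B}" using sub by blast
    then have "card (P \<inter> cball c (1/2)) \<le> card ((P \<inter> cball M (1/2)) - {B})"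
      using finM by (intro card_mono) auto
    also have "\<dots> = card (P \<inter> cball M (1/2)) - 1" using AM(2) finM by simp
    finally show ?thesis using bM by linarith
  next
    case False
    then have "P \<inter> cball c (1/2) \<subseteq> (P \<inter> cball M (1/2)) - {A}" using sub by blast
    then have "card (P \<inter> cball c (1/2)) \<le> card ((P \<inter> cball M (1/2)) - {A})"
      using finM by (intro card_mono) auto
    also have "\<dots> = card (P \<inter> cball M (1/2)) - 1" using AM(1) finM by simp
    finally show ?thesis using bM by linarith
  qed
qed

definition V0 :: complex where "V0 = 0"
definition V1 :: complex where "V1 = 1"
definition V2 :: complex where "V2 = Complex (1/2) (sqrt 3 / 2)"

lemma tri: "dist V0 V1 = 1" "dist V1 V2 = 1" "dist V0 V2 = 1"
  "dist V1 V0 = 1" "dist V2 V1 = 1" "dist V2 V0 = 1"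
proof -
  have s: "(sqrt 3 / 2)^2 = 3/4" by (simp add: power_divide)
  show a: "dist V0 V1 = 1" unfolding V0_def V1_def by simp
  show b: "dist V1 V2 = 1" unfolding dist_eq1_iff V1_def V2_def by (simp add: power_divide)
  show c: "dist V0 V2 = 1" unfolding dist_eq1_iff V0_def V2_def by (simp add: power_divide)
  show "dist V1 V0 = 1" "dist V2 V1 = 1" "dist V2 V0 = 1" using a b c by (simp_all add: dist_commute)
qed

lemma mid_mid: "dist ((A+B)/2) ((B+C)/2) = dist A C / 2" for A B C :: complex
proof -
  have e: "(A+B)/2 - (B+C)/2 = (A - C)/2" by (simp add: field_simps)
  show ?thesis unfolding dist_norm e by (simp add: norm_divide)
qed

definition good :: "nat \<Rightarrow> complex set \<Rightarrow> bool" where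
  "good n P \<longleftrightarrow> finite P \<and> card P = 3*n \<and> V0 \<in> P \<and> V1 \<in> P \<and> V2 \<in> P \<and>
     (\<forall>p\<in>P. \<forall>q\<in>P. dist p q \<le> 1) \<and> (\<forall>c. card (P \<inter> cball c (1/2)) \<le> n + 1)"

lemma card3_le: "card ({a,b,e} \<inter> D) \<le> (if a \<in> D then 1 else 0) + (if b \<in> D then 1 else 0) + (if e \<in> D then (1::nat) else 0)"
proof -
  have "{a,b,e} \<inter> D = ({a} \<inter> D) \<union> ({b} \<inter> D) \<union> ({e} \<inter> D)" by auto
  then have "card ({a,b,e} \<inter> D) \<le> card ({a} \<inter> D) + card ({b} \<inter> D) + card ({e} \<inter> D)"
    using order_trans[OF card_Un_le add_right_mono[OF card_Un_le]] by metis
  moreover have "card ({z} \<inter> D) = (if z \<in> D then 1 else 0)" for z by auto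
  ultimately show ?thesis by simp
qed

lemma base_good: "good 1 {V0, V1, V2}"
proof -
  have ne: "V0 \<noteq> V1" "V1 \<noteq> V2" "V0 \<noteq> V2" using tri(1-3) by (metis dist_self zero_neq_one)+
  have c3: "card {V0, V1, V2} = 3" using ne by simp
  have diam: "\<forall>p\<in>{V0,V1,V2}. \<forall>q\<in>{V0,V1,V2}. dist p q \<le> 1" by (simp add: tri)
  have disc: "card ({V0,V1,V2} \<inter> cball c (1/2)) \<le> 2" for c
  proof -
    have not3: "\<not> (V0 \<in> cball c (1/2) \<and> V1 \<in> cball c (1/2) \<and> V2 \<in> cball c (1/2))"
    proof
      assume h: "V0 \<in> cball c (1/2) \<and> V1 \<in> cball c (1/2) \<and> V2 \<in> cball c (1/2)"
      have h0: "dist c V0 \<le> 1/2" "dist c V1 \<le> 1/2" "dist c V2 \<le> 1/2" using h by auto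
      have ceq: "c = (V0+V1)/2" using pin[OF tri(1) h0(1) h0(2)] .
      have "dist ((V0+V1)/2) V2 \<le> 1/2" using h0(3) ceq by metis
      then have "(Re ((V0+V1)/2) - Re V2)^2 + (Im ((V0+V1)/2) - Im V2)^2 \<le> (1/2)^2"
        using dist_le_iff[of "1/2"] by simp
      then show False unfolding V0_def V1_def V2_def by (simp add: power_divide)
    qed
    have "card ({V0,V1,V2} \<inter> cball c (1/2)) \<le> (if V0 \<in> cball c (1/2) then 1 else 0) + (if V1 \<in> cball c (1/2) then 1 else 0) + (if V2 \<in> cball c (1/2) then 1 else 0)"
      by (rule card3_le)
    then show ?thesis using not3 by (simp split: if_splits)
  qed
  show ?thesis unfolding good_def using c3 diam disc[unfolded numeral_2_eq_2] by simp
qed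

lemma finite_pos_lb:
  fixes f :: "'a \<Rightarrow> real"
  assumes "finite S" "\<forall>s\<in>S. 0 < f s"
  shows "\<exists>g>0. \<forall>s\<in>S. g \<le> f s"
proof -
  define g where "g = Min (insert 1 (f ` S))"
  have "finite (insert 1 (f ` S))" using assms(1) by simp
  then have g0: "0 < g" unfolding g_def using assms(2) by (subst Min_gr_iff) auto
  have "\<forall>s\<in>S. g \<le> f s" unfolding g_def using assms(1) by (auto intro: Min_le)
  then show ?thesis using g0 by blast
qed

lemma step_good:
  assumes G: "good n P"
  shows "\<exists>P'. good (Suc n) P'"
proof -
  have fin: "finite P" and cardP: "card P = 3*n" and VP: "V0 \<in> P" "V1 \<in> P" "V2 \<in> P"
    and diam: "\<forall>p\<in>P. \<forall>q\<in>P. dist p q \<le> 1" and disc: "\<And>c. card (P \<inter> cball c (1/2)) \<le> n + 1"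
    using G unfolding good_def by auto
  define M01 where "M01 = (V0+V1)/2"
  define M12 where "M12 = (V1+V2)/2"
  define M20 where "M20 = (V2+V0)/2"
  define S where "S = {pM \<in> P \<times> {M01, M12, M20}. 1/2 < dist (fst pM) (snd pM)}"
  have finS: "finite S" unfolding S_def using fin by simp
  obtain g where g0: "0 < g" and gS: "\<forall>s\<in>S. g \<le> dist (fst s) (snd s) - 1/2"
    using finite_pos_lb[OF finS, of "\<lambda>s. dist (fst s) (snd s) - 1/2"] unfolding S_def by auto
  have gap: "\<forall>p\<in>P. dist p M \<le> 1/2 \<or> 1/2 + g \<le> dist p M" if "M \<in> {M01, M12, M20}" for M
  proof
    fix p assume p: "p \<in> P"
    show "dist p M \<le> 1/2 \<or> 1/2 + g \<le> dist p M"
    proof (cases "1/2 < dist p M")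
      case True
      then have "(p, M) \<in> S" unfolding S_def using p that by auto
      then show ?thesis using gS by force
    qed simp
  qed
  define T where "T = {pq \<in> P \<times> P. fst pq \<noteq> snd pq}"
  have finT: "finite T" unfolding T_def using fin by simp
  obtain h where h0: "0 < h" and hT: "\<forall>s\<in>T. h \<le> dist (fst s) (snd s)"
    using finite_pos_lb[OF finT, of "\<lambda>s. dist (fst s) (snd s)"] unfolding T_def by auto
  have sep: "h \<le> dist p q" if "p \<in> P" "q \<in> P" "p \<noteq> q" for p q
    using hT that unfolding T_def by force
  define d where "d = min (1/8) (min (g/4) (h/2))"
  have d0: "0 < d" unfolding d_def using g0 h0 by simp
  have d1: "d \<le> 1/8" "d \<le> g/4" "d \<le> h/2" unfolding d_def by auto
  have dd: "d^2 \<le> d/8" using d0 d1(1) by (simp add: power2_eq_square mult_left_mono)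
  have dA: "d^2 \<le> 1/2" using dd d1(1) by linarith
  have dB: "d + d^2 < g" using dd d1(2) g0 by linarith
  have dC: "d^2 < h" using dd d1(3) h0 d0 by linarith
  have dD: "d + d^2 < 1/4" using dd d1(1) by linarith
  have d00: "0 \<le> d" using d0 by simp
  have e0: "0 < d^2" using d0 by simp
  obtain x0 where x0: "dist x0 V1 = 1" "x0 \<noteq> V0" "dist x0 V0 \<le> d^2"
    and arc0: "\<forall>p. dist p V0 \<le> 1 \<longrightarrow> dist p V2 \<le> 1 \<longrightarrow> dist p x0 \<le> 1"
    using arc_point[OF tri(1) tri(2) tri(3) e0] by blast
  obtain x1 where x1: "dist x1 V2 = 1" "x1 \<noteq> V1" "dist x1 V1 \<le> d^2"
    and arc1: "\<forall>p. dist p V1 \<le> 1 \<longrightarrow> dist p V0 \<le> 1 \<longrightarrow> dist p x1 \<le> 1"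
    using arc_point[OF tri(2) tri(6) tri(4) e0] by blast
  obtain x2 where x2: "dist x2 V0 = 1" "x2 \<noteq> V2" "dist x2 V2 \<le> d^2"
    and arc2: "\<forall>p. dist p V2 \<le> 1 \<longrightarrow> dist p V1 \<le> 1 \<longrightarrow> dist p x2 \<le> 1"
    using arc_point[OF tri(6) tri(1) tri(5) e0] by blast
  define R where "R = (\<lambda>q. dist q V0 \<le> 1 \<and> dist q V1 \<le> 1 \<and> dist q V2 \<le> 1)"
  have RP: "R p" if "p \<in> P" for p
    using diam that VP unfolding R_def by (auto simp: dist_commute)
  have Rx0: "R x0"
  proof -
    have "dist V2 x0 \<le> 1" using arc0 tri by simp
    then show ?thesis unfolding R_def using x0 dA by (simp add: dist_commute)
  qed
  have Rx1: "R x1"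
  proof -
    have "dist V0 x1 \<le> 1" using arc1 tri by simp
    then show ?thesis unfolding R_def using x1 dA by (simp add: dist_commute)
  qed
  have Rx2: "R x2"
  proof -
    have "dist V1 x2 \<le> 1" using arc2 tri by simp
    then show ?thesis unfolding R_def using x2 dA by (simp add: dist_commute)
  qed
  have toX: "dist q x0 \<le> 1 \<and> dist q x1 \<le> 1 \<and> dist q x2 \<le> 1" if "R q" for q
    using that arc0 arc1 arc2 unfolding R_def by blast
  have notin: "x0 \<notin> P" "x1 \<notin> P" "x2 \<notin> P"
  proof -
    show "x0 \<notin> P" using sep[OF _ VP(1) x0(2)] x0(3) dC by force
    show "x1 \<notin> P" using sep[OF _ VP(2) x1(2)] x1(3) dC by force
    show "x2 \<notin> P" using sep[OF _ VP(3) x2(2)] x2(3) dC by force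
  qed
  have far: "0 < dist a b" if "dist a A \<le> d^2" "dist b B \<le> d^2" "dist A B = 1" for a b A B :: complex
  proof -
    have "dist A B \<le> dist A a + dist a b + dist b B"
      using dist_triangle[of A B a] dist_triangle[of a B b] by linarith
    then have "1 \<le> d^2 + dist a b + d^2" using that by (simp add: dist_commute)
    then show ?thesis using dd d1(1) by linarith
  qed
  have dx: "x0 \<noteq> x1" "x1 \<noteq> x2" "x0 \<noteq> x2"
    using far[OF x0(3) x1(3) tri(1)] far[OF x1(3) x2(3) tri(2)] far[OF x0(3) x2(3) tri(3)] by auto
  define P' where "P' = insert x0 (insert x1 (insert x2 P))"
  have finP': "finite P'" unfolding P'_def using fin by simp
  have cardP': "card P' = 3 * Suc n" unfolding P'_def using fin notin dx cardP by simp
  have VP': "V0 \<in> P'" "V1 \<in> P'" "V2 \<in> P'" unfolding P'_def using VP by auto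
  have RP': "R q" if "q \<in> P'" for q using that RP Rx0 Rx1 Rx2 unfolding P'_def by auto
  have diam': "\<forall>p\<in>P'. \<forall>q\<in>P'. dist p q \<le> 1"
  proof (intro ballI)
    fix p q assume p: "p \<in> P'" and q: "q \<in> P'"
    show "dist p q \<le> 1"
    proof (cases "q \<in> P")
      case True
      show ?thesis
      proof (cases "p \<in> P")
        case True
        then show ?thesis using diam \<open>q \<in> P\<close> by blast
      next
        case False
        then have "p = x0 \<or> p = x1 \<or> p = x2" using p unfolding P'_def by auto
        then show ?thesis using toX[OF RP[OF True]] by (auto simp: dist_commute)
      qed
    next
      case False
      then have "q = x0 \<or> q = x1 \<or> q = x2" using q unfolding P'_def by auto
      then show ?thesis using toX[OF RP'[OF p]] by auto
    qed
  qed
  have disc': "card (P' \<inter> cball c (1/2)) \<le> Suc n + 1" for c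
  proof -
    let ?D = "cball c (1/2)"
    have in_iff: "z \<in> ?D \<longleftrightarrow> dist c z \<le> 1/2" for z by simp
    have pb01: "card (P \<inter> ?D) \<le> n" if "x0 \<in> ?D" "x1 \<in> ?D"
      using pair_bound[OF fin VP(1) VP(2) tri(1) disc gap[of M01, unfolded M01_def] d00 dA dB x0(1) x0(2) x0(3) x1(3)]
        that by simp
    have pb12: "card (P \<inter> ?D) \<le> n" if "x1 \<in> ?D" "x2 \<in> ?D"
      using pair_bound[OF fin VP(2) VP(3) tri(2) disc gap[of M12, unfolded M12_def] d00 dA dB x1(1) x1(2) x1(3) x2(3)]
        that by simp
    have pb20: "card (P \<inter> ?D) \<le> n" if "x2 \<in> ?D" "x0 \<in> ?D"
      using pair_bound[OF fin VP(3) VP(1) tri(6) disc gap[of M20, unfolded M20_def] d00 dA dB x2(1) x2(2) x2(3) x0(3)]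
        that by simp
    have not3: "\<not> (x0 \<in> ?D \<and> x1 \<in> ?D \<and> x2 \<in> ?D)"
    proof
      assume h: "x0 \<in> ?D \<and> x1 \<in> ?D \<and> x2 \<in> ?D"
      have a: "dist c M01 \<le> d + d^2"
        unfolding M01_def using near[OF tri(1) d00 dA x0(3) x1(3)] h by simp
      have b: "dist c M12 \<le> d + d^2"
        unfolding M12_def using near[OF tri(2) d00 dA x1(3) x2(3)] h by simp
      have "dist M01 M12 = 1/2" unfolding M01_def M12_def mid_mid tri by simp
      moreover have "dist M01 M12 \<le> dist c M01 + dist c M12" by (rule dist_triangle3)
      ultimately show False using a b dD by linarith
    qed
    have split: "P' \<inter> ?D = (P \<inter> ?D) \<union> ({x0, x1, x2} \<inter> ?D)" unfolding P'_def by auto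
    have "card (P' \<inter> ?D) \<le> card (P \<inter> ?D) + card ({x0, x1, x2} \<inter> ?D)"
      unfolding split by (rule card_Un_le)
    moreover have "card ({x0, x1, x2} \<inter> ?D) \<le> (if x0 \<in> ?D then 1 else 0) + (if x1 \<in> ?D then 1 else 0) + (if x2 \<in> ?D then 1 else 0)"
      by (rule card3_le)
    moreover have "card (P \<inter> ?D) \<le> n + 1" by (rule disc)
    ultimately show ?thesis using pb01 pb12 pb20 not3 by (auto split: if_splits)
  qed
  have "good (Suc n) P'" unfolding good_def using finP' cardP' VP' diam' disc' by blast
  then show ?thesis by blast
qed

lemma upper_exists: "1 \<le> n \<Longrightarrow> \<exists>P. good n P"
proof (induction n rule: dec_induct)
  case base
  then show ?case using base_good by blast
next
  case (step m)
  then show ?case using step_good by blast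
qed



lemma jung_real:
  fixes u1 u2 v1 v2 :: real
  assumes L1: "(u1-v1)^2 + (u2-v2)^2 \<le> 1"
    and LU: "u1^2 + u2^2 \<le> (u1-v1)^2 + (u2-v2)^2"
    and LV: "v1^2 + v2^2 \<le> (u1-v1)^2 + (u2-v2)^2"
  shows "\<exists>c1 c2. c1^2 + c2^2 \<le> 1/3 \<and> (c1-u1)^2 + (c2-u2)^2 \<le> 1/3 \<and> (c1-v1)^2 + (c2-v2)^2 \<le> 1/3"
proof -
  define U where "U = u1^2 + u2^2"
  define V where "V = v1^2 + v2^2"
  define p where "p = u1* v1 + u2* v2"
  define q where "q = u1* v2 - u2* v1"
  define L where "L = (u1-v1)^2 + (u2-v2)^2"
  have Ld: "L = U + V - 2*p" unfolding L_def U_def V_def p_def by (simp add: power2_eq_square algebra_simps)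
  have L1': "L \<le> 1" using L1 unfolding L_def .
  have LU': "U \<le> L" using LU unfolding L_def U_def .
  have LV': "V \<le> L" using LV unfolding L_def V_def .
  have U0: "0 \<le> U" unfolding U_def by simp
  have V0: "0 \<le> V" unfolding V_def by simp
  show ?thesis
  proof (cases "p \<le> 0")
    case True
    define c1 where "c1 = (u1+v1)/2"
    define c2 where "c2 = (u2+v2)/2"
    have e1: "c1^2 + c2^2 = (U + V + 2*p)/4" unfolding c1_def c2_def U_def V_def p_def
      by (simp add: power2_eq_square field_simps)
    have e2: "(c1-u1)^2 + (c2-u2)^2 = L/4" unfolding c1_def c2_def L_def
      by (simp add: power2_eq_square field_simps)
    have e3: "(c1-v1)^2 + (c2-v2)^2 = L/4" unfolding c1_def c2_def L_def
      by (simp add: power2_eq_square field_simps)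
    have "c1^2 + c2^2 \<le> 1/3" using e1 Ld L1' True by argo
    moreover have "(c1-u1)^2 + (c2-u2)^2 \<le> 1/3" using e2 L1' by argo
    moreover have "(c1-v1)^2 + (c2-v2)^2 \<le> 1/3" using e3 L1' by argo
    ultimately show ?thesis by blast
  next
    case False
    then have p0: "0 < p" by simp
    have hp1: "2*p \<le> U" using Ld LV' by argo
    have hp2: "2*p \<le> V" using Ld LU' by argo
    have lag: "U*V = p^2 + q^2" unfolding U_def V_def p_def q_def
      by (simp add: power2_eq_square algebra_simps)
    have "(2*p)*(2*p) \<le> U*V" using hp1 hp2 p0 by (intro mult_mono) auto
    then have q3: "3*p^2 \<le> q^2" using lag by (simp add: power2_eq_square)
    have q0: "q \<noteq> 0" using q3 p0 by (metis less_le_trans mult_pos_pos power2_less_0 not_square_less_zero power_zero_numeral zero_less_numeral zero_less_power order.strict_iff_not)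
    define c1 where "c1 = (v2*U - u2*V)/(2*q)"
    define c2 where "c2 = (u1*V - v1*U)/(2*q)"
    have N: "(v2*U - u2*V)^2 + (u1*V - v1*U)^2 = U*V*L"
      unfolding U_def V_def L_def by (simp add: power2_eq_square algebra_simps)
    have cc0: "c1^2 + c2^2 = ((v2 * U - u2 * V)^2 + (u1 * V - v1 * U)^2)/(2*q)^2"
      unfolding c1_def c2_def by (simp add: power_divide add_divide_distrib)
    have cc: "c1^2 + c2^2 = U * V * L/(4*q^2)"
      unfolding cc0 N by (simp add: power2_eq_square)
    have nu: "(v2 * U - u2 * V) * u1 + (u1 * V - v1 * U) * u2 = U * q"
      unfolding q_def by (simp add: algebra_simps)
    have nv: "(v2 * U - u2 * V) * v1 + (u1 * V - v1 * U) * v2 = V * q"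
      unfolding q_def by (simp add: algebra_simps)
    have cu0: "c1 * u1 + c2 * u2 = ((v2 * U - u2 * V) * u1 + (u1 * V - v1 * U) * u2)/(2*q)"
      unfolding c1_def c2_def by (simp add: add_divide_distrib)
    have cv0: "c1 * v1 + c2 * v2 = ((v2 * U - u2 * V) * v1 + (u1 * V - v1 * U) * v2)/(2*q)"
      unfolding c1_def c2_def by (simp add: add_divide_distrib)
    have cu: "c1 * u1 + c2 * u2 = U/2" unfolding cu0 nu using q0 by simp
    have cv: "c1 * v1 + c2 * v2 = V/2" unfolding cv0 nv using q0 by simp
    have b1: "U*V*L \<le> U*V" using L1' U0 V0 by (simp add: mult_left_le)
    have b2: "3*(U*V) \<le> 4*q^2" using lag q3 by argo
    have q2: "0 < q^2" using q0 by simp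
    have "3*(U*V*L) \<le> 4*q^2" using b1 b2 by argo
    then have r: "c1^2 + c2^2 \<le> 1/3" unfolding cc using q2 by (simp add: field_simps)
    have e2: "(c1-u1)^2 + (c2-u2)^2 = (c1^2 + c2^2) - 2*(c1*u1 + c2*u2) + U"
      unfolding U_def by (simp add: power2_eq_square algebra_simps)
    have e3: "(c1-v1)^2 + (c2-v2)^2 = (c1^2 + c2^2) - 2*(c1* v1 + c2* v2) + V"
      unfolding V_def by (simp add: power2_eq_square algebra_simps)
    have "(c1-u1)^2 + (c2-u2)^2 \<le> 1/3" using e2 cu r by argo
    moreover have "(c1-v1)^2 + (c2-v2)^2 \<le> 1/3" using e3 cv r by argo
    ultimately show ?thesis using r by blast
  qed
qed

lemma jung_long:
  fixes x y z :: complex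
  assumes xy: "dist x y \<le> 1" and xz: "dist x z \<le> dist x y" and yz: "dist y z \<le> dist x y"
  shows "\<exists>c. (dist c x)^2 \<le> 1/3 \<and> (dist c y)^2 \<le> 1/3 \<and> (dist c z)^2 \<le> 1/3"
proof -
  define u1 where "u1 = Re x - Re z"
  define u2 where "u2 = Im x - Im z"
  define v1 where "v1 = Re y - Re z"
  define v2 where "v2 = Im y - Im z"
  have exy: "(u1 - v1)^2 + (u2 - v2)^2 = (dist x y)^2" unfolding dist_sq u1_def u2_def v1_def v2_def
    by (simp add: algebra_simps)
  have exz: "u1^2 + u2^2 = (dist x z)^2" unfolding dist_sq u1_def u2_def by simp
  have eyz: "v1^2 + v2^2 = (dist y z)^2" unfolding dist_sq v1_def v2_def by simp
  have a1: "(dist x y)^2 \<le> 1" using xy zero_le_dist by (simp add: power_le_one)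
  have a2: "(dist x z)^2 \<le> (dist x y)^2" using xz zero_le_dist by (simp add: power_mono)
  have a3: "(dist y z)^2 \<le> (dist x y)^2" using yz zero_le_dist by (simp add: power_mono)
  obtain c1 c2 where c: "c1^2 + c2^2 \<le> 1/3" "(c1-u1)^2 + (c2-u2)^2 \<le> 1/3" "(c1-v1)^2 + (c2-v2)^2 \<le> 1/3"
    using jung_real[of u1 v1 u2 v2] a1 a2 a3 exy exz eyz by auto
  define c where "c = z + Complex c1 c2"
  have "(dist c z)^2 = c1^2 + c2^2" unfolding c_def dist_sq by simp
  moreover have "(dist c x)^2 = (c1-u1)^2 + (c2-u2)^2" unfolding c_def dist_sq u1_def u2_def
    by (simp add: algebra_simps)
  moreover have "(dist c y)^2 = (c1-v1)^2 + (c2-v2)^2" unfolding c_def dist_sq v1_def v2_def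
    by (simp add: algebra_simps)
  ultimately show ?thesis using c by metis
qed

lemma jung3:
  fixes x y z :: complex
  assumes "dist x y \<le> 1" "dist y z \<le> 1" "dist x z \<le> 1"
  shows "\<exists>c. dist x c \<le> sqrt (1/3) \<and> dist y c \<le> sqrt (1/3) \<and> dist z c \<le> sqrt (1/3)"
proof -
  have "\<exists>c. (dist c x)^2 \<le> 1/3 \<and> (dist c y)^2 \<le> 1/3 \<and> (dist c z)^2 \<le> 1/3"
  proof (cases "dist x z \<le> dist x y \<and> dist y z \<le> dist x y")
    case True
    then show ?thesis using jung_long[OF assms(1)] by blast
  next
    case F1: False
    show ?thesis
    proof (cases "dist x y \<le> dist x z \<and> dist z y \<le> dist x z")
      case True
      then show ?thesis using jung_long[OF assms(3)] by blast
    next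
      case False
      then have "dist y x \<le> dist y z \<and> dist z x \<le> dist y z" using F1 by (auto simp: dist_commute)
      then show ?thesis using jung_long[OF assms(2)] by blast
    qed
  qed
  then obtain c where "(dist c x)^2 \<le> 1/3" "(dist c y)^2 \<le> 1/3" "(dist c z)^2 \<le> 1/3" by blast
  then show ?thesis by (metis real_le_rsqrt dist_commute)
qed

lemma jung_center:
  fixes P :: "complex set"
  assumes fin: "finite P" and c3: "3 \<le> card P" and diam: "\<forall>x\<in>P. \<forall>y\<in>P. dist x y \<le> 1"
  shows "\<exists>ctr. \<forall>p\<in>P. dist p ctr \<le> sqrt (1/3)"
proof -
  define r where "r = sqrt (1/3::real)"
  have r0: "0 < r" unfolding r_def by simp
  define F where "F = (\<lambda>p. cball p r) ` P"
  have inj: "inj_on (\<lambda>p. cball p r) P"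
    using r0 by (auto simp: inj_on_def cball_eq_cball_iff)
  have cF: "card F = card P" unfolding F_def using inj by (simp add: card_image)
  have "\<Inter>F \<noteq> {}"
  proof (rule Helly)
    show "DIM(complex) + 1 \<le> card F" using cF c3 by simp
    show "\<forall>s\<in>F. convex s" unfolding F_def by simp
    fix t assume t: "t \<subseteq> F" "card t = DIM(complex) + 1"
    then obtain A B C where ABC: "t = {A, B, C}" by (auto simp: card_3_iff)
    have "A \<in> F" "B \<in> F" "C \<in> F" using t ABC by auto
    then obtain a b e where abe: "a \<in> P" "b \<in> P" "e \<in> P" "A = cball a r" "B = cball b r" "C = cball e r"
      unfolding F_def by blast
    obtain c where "dist a c \<le> r" "dist b c \<le> r" "dist e c \<le> r"
      using jung3[of a b e] diam abe unfolding r_def by blast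
    then have "c \<in> \<Inter>t" using ABC abe by simp
    then show "\<Inter>t \<noteq> {}" by blast
  qed
  then obtain ctr where "ctr \<in> \<Inter>F" by blast
  then have "\<forall>p\<in>P. dist p ctr \<le> r" unfolding F_def by auto
  then show ?thesis unfolding r_def by blast
qed

lemma sector_real:
  fixes a b r :: real
  assumes r2: "r^2 = 1/3" and r0: "0 < r" and ab: "a^2 + b^2 \<le> r^2"
  shows "(a - r/2)^2 + b^2 \<le> 1/4 \<or> (a + r/4)^2 + (b - 1/4)^2 \<le> 1/4 \<or> (a + r/4)^2 + (b + 1/4)^2 \<le> 1/4"
proof -
  define \<rho> where "\<rho> = sqrt (a^2 + b^2)"
  have \<rho>0: "0 \<le> \<rho>" unfolding \<rho>_def by simp
  have \<rho>2: "\<rho>^2 = a^2 + b^2" unfolding \<rho>_def by simp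
  have \<rho>r: "\<rho> \<le> r" using real_sqrt_le_mono[OF ab] r0 unfolding \<rho>_def by simp
  have key: "\<rho>^2 - r*\<rho>/2 \<le> 1/6"
  proof -
    have "(\<rho> - r) * (\<rho> + r/2) \<le> 0" using \<rho>r \<rho>0 r0 by (simp add: mult_nonpos_nonneg)
    moreover have "(\<rho> - r) * (\<rho> + r/2) = \<rho>^2 - r*\<rho>/2 - r^2/2" by (simp add: power2_eq_square field_simps)
    ultimately show ?thesis using r2 by argo
  qed
  have aa: "\<bar>a\<bar> \<le> \<rho>"
  proof -
    have "sqrt (a^2) \<le> sqrt (a^2 + b^2)" by (rule real_sqrt_le_mono) simp
    then show ?thesis unfolding \<rho>_def by simp
  qed
  show ?thesis
  proof (cases "\<rho>/2 \<le> a")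
    case True
    have e: "(a - r/2)^2 + b^2 = \<rho>^2 - r*a + r^2/4" using \<rho>2 by (simp add: power2_eq_square algebra_simps)
    have "r*(\<rho>/2) \<le> r*a" using True r0 by simp
    then have "(a - r/2)^2 + b^2 \<le> 1/4" using e key r2 by argo
    then show ?thesis by blast
  next
    case False
    then have alt: "a < \<rho>/2" by simp
    have pa: "0 \<le> \<rho> + a" using aa by linarith
    have sq: "(\<rho> + a)^2 \<le> 3*b^2"
    proof -
      have "3*b^2 - (\<rho> + a)^2 = (\<rho> + a)*(2*\<rho> - 4*a)" using \<rho>2 by (simp add: power2_eq_square algebra_simps)
      moreover have "0 \<le> (\<rho> + a)*(2*\<rho> - 4*a)" using pa alt by simp
      ultimately show ?thesis by argo
    qed
    have sq2: "(r*(\<rho> + a))^2 \<le> (\<bar>b\<bar>)^2"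
    proof -
      have "(r*(\<rho> + a))^2 = (\<rho> + a)^2/3" using r2 by (simp add: power_mult_distrib)
      then show ?thesis using sq by simp
    qed
    have bb: "r*(\<rho> + a) \<le> \<bar>b\<bar>" using sq2 by (rule power2_le_imp_le) simp
    show ?thesis
    proof (cases "0 \<le> b")
      case True
      have e: "(a + r/4)^2 + (b - 1/4)^2 = \<rho>^2 + r*a/2 - b/2 + r^2/16 + 1/16"
        using \<rho>2 by (simp add: power2_eq_square algebra_simps)
      have "r*(\<rho> + a) \<le> b" using bb True by simp
      then have h: "r*\<rho> + r*a \<le> b" by (simp add: distrib_left)
      have "(a + r/4)^2 + (b - 1/4)^2 \<le> 1/4" using e key r2 h by argo
      then show ?thesis by blast
    next
      case False
      have e: "(a + r/4)^2 + (b + 1/4)^2 = \<rho>^2 + r*a/2 + b/2 + r^2/16 + 1/16"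
        using \<rho>2 by (simp add: power2_eq_square algebra_simps)
      have "r*(\<rho> + a) \<le> - b" using bb False by simp
      then have h: "r*\<rho> + r*a \<le> - b" by (simp add: distrib_left)
      have "(a + r/4)^2 + (b + 1/4)^2 \<le> 1/4" using e key r2 h by argo
      then show ?thesis by blast
    qed
  qed
qed

lemma lower:
  fixes P :: "complex set" and n :: nat
  assumes P: "P \<in> point_sets (3*n)" and n1: "1 \<le> n"
  shows "\<exists>c. n \<le> card (P \<inter> cball c (1/2))"
proof -
  have fin: "finite P" and cP: "card P = 3*n" and diam: "\<forall>x\<in>P. \<forall>y\<in>P. dist x y \<le> 1"
    using P unfolding point_sets_def by auto
  obtain ctr where ctr: "\<forall>p\<in>P. dist p ctr \<le> sqrt (1/3)"
    using jung_center[OF fin _ diam] cP n1 by auto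
  define r where "r = sqrt (1/3::real)"
  have r2: "r^2 = 1/3" and r0: "0 < r" unfolding r_def by simp_all
  define C0 where "C0 = ctr + Complex (r/2) 0"
  define C1 where "C1 = ctr + Complex (-r/4) (1/4)"
  define C2 where "C2 = ctr + Complex (-r/4) (-1/4)"
  have cover: "P \<subseteq> cball C0 (1/2) \<union> cball C1 (1/2) \<union> cball C2 (1/2)"
  proof
    fix p assume p: "p \<in> P"
    define a where "a = Re p - Re ctr"
    define b where "b = Im p - Im ctr"
    have "dist p ctr \<le> r" using ctr p unfolding r_def by blast
    then have "(dist p ctr)^2 \<le> r^2" by (rule power_mono) simp
    then have ab: "a^2 + b^2 \<le> r^2" unfolding dist_sq a_def b_def .
    have "(a - r/2)^2 + b^2 \<le> 1/4 \<or> (a + r/4)^2 + (b - 1/4)^2 \<le> 1/4 \<or> (a + r/4)^2 + (b + 1/4)^2 \<le> 1/4"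
      by (rule sector_real[OF r2 r0 ab])
    moreover have "dist C0 p \<le> 1/2 \<longleftrightarrow> (a - r/2)^2 + b^2 \<le> 1/4"
    proof -
      have "(Re C0 - Re p)^2 + (Im C0 - Im p)^2 = (a - r/2)^2 + b^2"
        unfolding C0_def a_def b_def by (simp add: power2_eq_square algebra_simps)
      then show ?thesis using dist_le_iff[of "1/2" C0 p] by (simp add: power_divide)
    qed
    moreover have "dist C1 p \<le> 1/2 \<longleftrightarrow> (a + r/4)^2 + (b - 1/4)^2 \<le> 1/4"
    proof -
      have "(Re C1 - Re p)^2 + (Im C1 - Im p)^2 = (a + r/4)^2 + (b - 1/4)^2"
        unfolding C1_def a_def b_def by (simp add: power2_eq_square algebra_simps)
      then show ?thesis using dist_le_iff[of "1/2" C1 p] by (simp add: power_divide)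
    qed
    moreover have "dist C2 p \<le> 1/2 \<longleftrightarrow> (a + r/4)^2 + (b + 1/4)^2 \<le> 1/4"
    proof -
      have "(Re C2 - Re p)^2 + (Im C2 - Im p)^2 = (a + r/4)^2 + (b + 1/4)^2"
        unfolding C2_def a_def b_def by (simp add: power2_eq_square algebra_simps)
      then show ?thesis using dist_le_iff[of "1/2" C2 p] by (simp add: power_divide)
    qed
    ultimately show "p \<in> cball C0 (1/2) \<union> cball C1 (1/2) \<union> cball C2 (1/2)" by auto
  qed
  have Peq: "P = (P \<inter> cball C0 (1/2)) \<union> (P \<inter> cball C1 (1/2)) \<union> (P \<inter> cball C2 (1/2))"
    using cover by blast
  have "card P \<le> card (P \<inter> cball C0 (1/2)) + card (P \<inter> cball C1 (1/2)) + card (P \<inter> cball C2 (1/2))"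
    by (subst Peq) (rule order_trans[OF card_Un_le add_right_mono[OF card_Un_le]])
  then have "n \<le> card (P \<inter> cball C0 (1/2)) \<or> n \<le> card (P \<inter> cball C1 (1/2)) \<or> n \<le> card (P \<inter> cball C2 (1/2))"
    using cP by linarith
  then show ?thesis by blast
qed

theorem theorem3:
  fixes n :: nat
  assumes "n \<ge> 1"
  shows "n \<le> N (3 * n) (1 / 2) \<and> N (3 * n) (1 / 2) \<le> n + 1"
proof -
  define Q where "Q = (\<lambda>k. \<forall>P \<in> point_sets (3*n). \<exists>c. card (P \<inter> cball c (1/2)) \<ge> k)"
  have NQ: "N (3 * n) (1 / 2) = Greatest Q" unfolding N_def Q_def by simp
  obtain P0 where G: "good n P0" using upper_exists[OF assms] by blast
  have P0: "P0 \<in> point_sets (3*n)" and P0d: "\<And>c. card (P0 \<inter> cball c (1/2)) \<le> n + 1"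
    using G unfolding good_def point_sets_def by auto
  have bound: "y \<le> n + 1" if Qy: "Q y" for y
  proof -
    obtain c where "card (P0 \<inter> cball c (1/2)) \<ge> y" using Qy P0 unfolding Q_def by blast
    then show ?thesis using P0d[of c] by linarith
  qed
  have Qn: "Q n" unfolding Q_def using lower assms by blast
  have "n \<le> Greatest Q" using Greatest_le_nat[of Q n "n+1"] Qn bound by blast
  moreover have "Q (Greatest Q)" using GreatestI_nat[of Q n "n+1"] Qn bound by blast
  then have "Greatest Q \<le> n + 1" by (rule bound)
  ultimately show ?thesis unfolding NQ by simp
qed

end
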